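(* Let $n\ge3$ and let $G=K_{1,n-1}$ be the uniform coloured star graph on vertices $1,\dots,n$ with centre $1$ (edges $\{1,j\}$, $j=2,\dots,n$), with associated linear space $\mathcal L$. Let $E$ be its edge set and $E^c$ the set of pairs $\{i,j\}$ of distinct vertices with $i,j\ge2$. Then $r=3$, $s=4$, and the vector space of linear forms in $I(\mathcal L^{-1})$ is spanned by $x_{22}-x_{ii}$ ($i=3,\dots,n$); $x_{12}-x_{ij}$ ($\{i,j\}\in E$); $x_{23}-x_{ij}$ ($\{i,j\}\in E^c$); and $x_{11}-(n-2)\,x_{n-1,n}-x_{nn}$.
   Context: For a simple graph $G$ on $V=\{1,\dots,n\}$, its uniform coloured version has one vertex colour and one edge colour, and its associated linear space is $\mathcal L=\{\lambda_1I_n+\lambda_2A_2:\lambda_1,\lambda_2\in\mathbb C\}\subseteq\mathbb S^n$, where $A_2$ is the 0/1 adjacency matrix of $G$. The reciprocal variety $\mathcal L^{-1}$ is the Zariski closure of $\{M^{-1}:M\in\mathcal L\text{ invertible}\}$, with vanishing ideal $I(\mathcal L^{-1})\subseteq\mathbb C[x_{ij}:1\le i\le j\le n]$, using $x_{ji}=x_{ij}$. Here $r$ is the number of distinct eigenvalues of $A_2$ and $s$ is the number of orbits of the automorphism group of $G$ acting on unordered pairs $\{i,j\}$ of (not necessarily distinct) vertices via $\{i,j\}\mapsto\{\sigma(i),\sigma(j)\}$. *)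

theory Defs
  imports "Jordan_Normal_Form.Matrix" "Jordan_Normal_Form.Char_Poly" "HOL-Library.Poly_Mapping"
begin

text \<open>Polynomials in the variables x_(i,j), represented by pairs (i,j) of naturals,
  with complex coefficients: finitely supported maps from monomials to coefficients.\<close>
type_synonym monom = "(nat \<times> nat) \<Rightarrow>\<^sub>0 nat"
type_synonym cpoly = "monom \<Rightarrow>\<^sub>0 complex"

definition peval :: "cpoly \<Rightarrow> (nat \<times> nat \<Rightarrow> complex) \<Rightarrow> complex" where
  "peval f y = (\<Sum>m\<in>Poly_Mapping.keys f. Poly_Mapping.lookup f m * (\<Prod>v\<in>Poly_Mapping.keys m. y v ^ Poly_Mapping.lookup m v))"

definition sym_idx :: "nat \<Rightarrow> (nat \<times> nat) set" where
  "sym_idx n = {(i,j). 1 \<le> i \<and> i \<le> j \<and> j \<le> n}"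

definition polys_in :: "nat \<Rightarrow> cpoly set" where
  "polys_in n = {f. \<forall>m\<in>Poly_Mapping.keys f. Poly_Mapping.keys m \<subseteq> sym_idx n}"

definition zariski_closure :: "nat \<Rightarrow> (nat \<times> nat \<Rightarrow> complex) set \<Rightarrow> (nat \<times> nat \<Rightarrow> complex) set" where
  "zariski_closure n S = {y. \<forall>f\<in>polys_in n. (\<forall>x\<in>S. peval f x = 0) \<longrightarrow> peval f y = 0}"

definition vanishing_ideal :: "nat \<Rightarrow> (nat \<times> nat \<Rightarrow> complex) set \<Rightarrow> cpoly set" where
  "vanishing_ideal n V = {f\<in>polys_in n. \<forall>y\<in>V. peval f y = 0}"

text \<open>Coordinates x_ij of an n x n matrix (1-based indices; matrix entries are 0-based).\<close>
definition coords :: "complex mat \<Rightarrow> nat \<times> nat \<Rightarrow> complex" where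
  "coords N = (\<lambda>(i,j). N $$ (i - 1, j - 1))"

definition adj_mat :: "nat \<Rightarrow> (nat \<Rightarrow> nat \<Rightarrow> bool) \<Rightarrow> complex mat" where
  "adj_mat n E = mat n n (\<lambda>(i,j). if E (i+1) (j+1) then 1 else 0)"

definition lin_space :: "nat \<Rightarrow> (nat \<Rightarrow> nat \<Rightarrow> bool) \<Rightarrow> complex mat set" where
  "lin_space n E = {l1 \<cdot>\<^sub>m 1\<^sub>m n + l2 \<cdot>\<^sub>m adj_mat n E | l1 l2. True}"

definition reciprocal_variety :: "nat \<Rightarrow> (nat \<Rightarrow> nat \<Rightarrow> bool) \<Rightarrow> (nat \<times> nat \<Rightarrow> complex) set" where
  "reciprocal_variety n E = zariski_closure n
     (coords ` {N \<in> carrier_mat n n. \<exists>M\<in>lin_space n E. M * N = 1\<^sub>m n \<and> N * M = 1\<^sub>m n})"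

definition num_eigenvalues :: "nat \<Rightarrow> (nat \<Rightarrow> nat \<Rightarrow> bool) \<Rightarrow> nat" where
  "num_eigenvalues n E = card {k. eigenvalue (adj_mat n E) k}"

definition graph_aut :: "nat \<Rightarrow> (nat \<Rightarrow> nat \<Rightarrow> bool) \<Rightarrow> (nat \<Rightarrow> nat) set" where
  "graph_aut n E = {\<sigma>. bij_betw \<sigma> {1..n} {1..n} \<and>
      (\<forall>i\<in>{1..n}. \<forall>j\<in>{1..n}. E (\<sigma> i) (\<sigma> j) \<longleftrightarrow> E i j)}"

definition upairs :: "nat \<Rightarrow> nat set set" where
  "upairs n = {{i,j} | i j. i \<in> {1..n} \<and> j \<in> {1..n}}"

definition num_pair_orbits :: "nat \<Rightarrow> (nat \<Rightarrow> nat \<Rightarrow> bool) \<Rightarrow> nat" where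
  "num_pair_orbits n E = card ((\<lambda>P. {\<sigma> ` P | \<sigma>. \<sigma> \<in> graph_aut n E}) ` upairs n)"

definition is_linear_form :: "cpoly \<Rightarrow> bool" where
  "is_linear_form f = (\<forall>m\<in>Poly_Mapping.keys f. (\<Sum>v\<in>Poly_Mapping.keys m. Poly_Mapping.lookup m v) = 1)"

definition var :: "nat \<Rightarrow> nat \<Rightarrow> cpoly" where
  "var i j = Poly_Mapping.single (Poly_Mapping.single (min i j, max i j) 1) 1"

definition cscale :: "complex \<Rightarrow> cpoly \<Rightarrow> cpoly" where
  "cscale c f = Poly_Mapping.map (\<lambda>a. c * a) f"

definition cspan :: "cpoly set \<Rightarrow> cpoly set" where
  "cspan G = {f. \<exists>F c. F \<subseteq> G \<and> finite F \<and> f = (\<Sum>g\<in>F. cscale (c g) g)}"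

definition star_graph :: "nat \<Rightarrow> nat \<Rightarrow> nat \<Rightarrow> bool" where
  "star_graph n i j = (i \<in> {1..n} \<and> j \<in> {1..n} \<and> i \<noteq> j \<and> (i = 1 \<or> j = 1))"

end

theory Submission
  imports Defs
begin

lemma lookup_cscale[simp]: "Poly_Mapping.lookup (cscale c f) k = c * Poly_Mapping.lookup f k"
  unfolding cscale_def by (simp add: Poly_Mapping.map.rep_eq when_def)

lemma cscale_add: "cscale c (f + g) = cscale c f + cscale c g"
  by (rule poly_mapping_eqI) (simp add: lookup_add algebra_simps)
lemma cscale_diff: "cscale c (f - g) = cscale c f - cscale c g"
  by (rule poly_mapping_eqI) (simp add: lookup_minus algebra_simps)
lemma cscale_addc: "cscale (a + b) f = cscale a f + cscale b f"
  by (rule poly_mapping_eqI) (simp add: lookup_add algebra_simps)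
lemma cscale_mult: "cscale a (cscale b f) = cscale (a * b) f"
  by (rule poly_mapping_eqI) (simp add: algebra_simps)
lemma cscale_1[simp]: "cscale 1 f = f"
  by (rule poly_mapping_eqI) simp
lemma cscale_0[simp]: "cscale 0 f = 0"
  by (rule poly_mapping_eqI) simp
lemma cscale_z[simp]: "cscale c 0 = 0"
  by (rule poly_mapping_eqI) simp
lemma cscale_m1: "cscale (-1) f = - f"
  by (rule poly_mapping_eqI) simp
lemma cscale_sum: "cscale c (sum g A) = (\<Sum>x\<in>A. cscale c (g x))"
  by (rule poly_mapping_eqI) (simp add: lookup_sum sum_distrib_left)
lemma keys_cscale: "Poly_Mapping.keys (cscale c f) \<subseteq> Poly_Mapping.keys f"
  by (auto simp: in_keys_iff)

definition meval :: "monom \<Rightarrow> (nat \<times> nat \<Rightarrow> complex) \<Rightarrow> complex" where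
  "meval m y = (\<Prod>v\<in>Poly_Mapping.keys m. y v ^ Poly_Mapping.lookup m v)"

lemma peval_sup: assumes "finite K" "Poly_Mapping.keys f \<subseteq> K"
  shows "peval f y = (\<Sum>m\<in>K. Poly_Mapping.lookup f m * meval m y)"
  unfolding peval_def meval_def
  by (rule sum.mono_neutral_left) (use assms in \<open>auto simp: in_keys_iff\<close>)

lemma peval_add: "peval (f + g) y = peval f y + peval g y"
proof -
  let ?K = "Poly_Mapping.keys f \<union> Poly_Mapping.keys g"
  have "peval (f+g) y = (\<Sum>m\<in>?K. Poly_Mapping.lookup (f+g) m * meval m y)"
    by (rule peval_sup) (use keys_add[of f g] in auto)
  also have "\<dots> = (\<Sum>m\<in>?K. Poly_Mapping.lookup f m * meval m y) + (\<Sum>m\<in>?K. Poly_Mapping.lookup g m * meval m y)"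
    by (simp add: lookup_add algebra_simps sum.distrib)
  also have "\<dots> = peval f y + peval g y"
    by (subst (1 2) peval_sup[of ?K]) auto
  finally show ?thesis .
qed

lemma peval_cscale: "peval (cscale c f) y = c * peval f y"
proof -
  have "peval (cscale c f) y = (\<Sum>m\<in>Poly_Mapping.keys f. Poly_Mapping.lookup (cscale c f) m * meval m y)"
    by (rule peval_sup) (auto simp: keys_cscale[THEN subsetD])
  also have "\<dots> = c * peval f y"
    by (subst peval_sup[of "Poly_Mapping.keys f"]) (auto simp: sum_distrib_left algebra_simps)
  finally show ?thesis .
qed

lemma peval_uminus: "peval (- f) y = - peval f y"
  using peval_cscale[of "-1" f y] by (simp add: cscale_m1)

lemma peval_diff: "peval (f - g) y = peval f y - peval g y"
  using peval_add[of f "-g" y] by (simp add: peval_uminus)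

lemma peval_zero[simp]: "peval 0 y = 0"
  by (simp add: peval_def)

lemma peval_sum: "finite A \<Longrightarrow> peval (sum g A) y = (\<Sum>x\<in>A. peval (g x) y)"
  by (induction A rule: finite_induct) (auto simp: peval_add)

definition X :: "nat \<times> nat \<Rightarrow> cpoly" where
  "X v = Poly_Mapping.single (Poly_Mapping.single v 1) 1"

lemma var_X: "var i j = X (min i j, max i j)"
  by (simp add: var_def X_def)

lemma peval_X[simp]: "peval (X v) y = y v"
  by (simp add: peval_def X_def)

lemma keys_X[simp]: "Poly_Mapping.keys (X v) = {Poly_Mapping.single v 1}"
  by (simp add: X_def)

lemma lookup_X: "Poly_Mapping.lookup (X v) m = (if m = Poly_Mapping.single v 1 then 1 else 0)"
  by (simp add: X_def lookup_single when_def)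


lemma cspan_base: "g \<in> G \<Longrightarrow> g \<in> cspan G"
  unfolding cspan_def by (rule CollectI, rule exI[of _ "{g}"], rule exI[of _ "\<lambda>_. 1"]) simp

lemma cspan_zero: "0 \<in> cspan G"
  unfolding cspan_def by (rule CollectI, rule exI[of _ "{}"]) simp

lemma cspan_cscale: "f \<in> cspan G \<Longrightarrow> cscale a f \<in> cspan G"
proof -
  assume "f \<in> cspan G"
  then obtain F c where F: "F \<subseteq> G" "finite F" "f = (\<Sum>g\<in>F. cscale (c g) g)" by (auto simp: cspan_def)
  have e: "cscale a f = (\<Sum>g\<in>F. cscale (a * c g) g)" unfolding F(3) by (simp add: cscale_sum cscale_mult)
  show ?thesis unfolding cspan_def using F(1,2) e by (intro CollectI exI[of _ F] exI[of _ "\<lambda>g. a * c g"]) simp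
qed

lemma cspan_add: assumes "f \<in> cspan G" "h \<in> cspan G" shows "f + h \<in> cspan G"
proof -
  obtain F1 c1 where F1: "F1 \<subseteq> G" "finite F1" "f = (\<Sum>g\<in>F1. cscale (c1 g) g)" using assms(1) by (auto simp: cspan_def)
  obtain F2 c2 where F2: "F2 \<subseteq> G" "finite F2" "h = (\<Sum>g\<in>F2. cscale (c2 g) g)" using assms(2) by (auto simp: cspan_def)
  define c where "c g = (if g \<in> F1 then c1 g else 0) + (if g \<in> F2 then c2 g else 0)" for g
  have "(\<Sum>g\<in>F1 \<union> F2. cscale (c g) g) = (\<Sum>g\<in>F1 \<union> F2. cscale (if g \<in> F1 then c1 g else 0) g) + (\<Sum>g\<in>F1 \<union> F2. cscale (if g \<in> F2 then c2 g else 0) g)"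
    by (simp add: c_def cscale_addc sum.distrib)
  also have "(\<Sum>g\<in>F1 \<union> F2. cscale (if g \<in> F1 then c1 g else 0) g) = f"
    unfolding F1(3) by (rule sum.mono_neutral_cong_right) (use F1 F2 in auto)
  also have "(\<Sum>g\<in>F1 \<union> F2. cscale (if g \<in> F2 then c2 g else 0) g) = h"
    unfolding F2(3) by (rule sum.mono_neutral_cong_right) (use F1 F2 in auto)
  finally show ?thesis unfolding cspan_def using F1 F2 by (intro CollectI exI[of _ "F1 \<union> F2"] exI[of _ c]) auto
qed

lemma cspan_uminus: "f \<in> cspan G \<Longrightarrow> - f \<in> cspan G"
  using cspan_cscale[of f G "-1"] by (simp add: cscale_m1)

lemma cspan_diff: "f \<in> cspan G \<Longrightarrow> h \<in> cspan G \<Longrightarrow> f - h \<in> cspan G"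
  using cspan_add[of f G "-h"] cspan_uminus[of h G] by simp

lemma cspan_sum: "(\<And>x. x \<in> A \<Longrightarrow> g x \<in> cspan G) \<Longrightarrow> sum g A \<in> cspan G"
proof (induction A rule: infinite_finite_induct)
  case (insert x F)
  then show ?case by (simp add: cspan_add)
qed (simp_all add: cspan_zero)

lemma cspan_sub:
  assumes "P 0" "\<And>f h. P f \<Longrightarrow> P h \<Longrightarrow> P (f + h)" "\<And>a f. P f \<Longrightarrow> P (cscale a f)"
    "\<And>g. g \<in> G \<Longrightarrow> P g" "f \<in> cspan G"
  shows "P f"
proof -
  obtain F c where F: "F \<subseteq> G" "finite F" "f = (\<Sum>g\<in>F. cscale (c g) g)" using assms(5) by (auto simp: cspan_def)
  have "P (\<Sum>g\<in>F. cscale (c g) g)" using F(2,1)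
  proof (induction F rule: finite_induct)
    case (insert x F)
    then show ?case by (simp add: assms(2,3,4))
  qed (simp add: assms(1))
  with F show ?thesis by simp
qed

definition KK :: "nat \<Rightarrow> monom set" where
  "KK n = (\<lambda>v. Poly_Mapping.single v 1) ` sym_idx n"

lemma monom_sum_one:
  assumes "(\<Sum>v\<in>Poly_Mapping.keys m. Poly_Mapping.lookup m v) = (1::nat)"
  shows "\<exists>v. m = Poly_Mapping.single v 1 \<and> Poly_Mapping.keys m = {v}"
proof -
  have ne: "Poly_Mapping.keys m \<noteq> {}" using assms by auto
  then obtain v where v: "v \<in> Poly_Mapping.keys m" by blast
  have fin: "finite (Poly_Mapping.keys m)" by simp
  have split: "(\<Sum>w\<in>Poly_Mapping.keys m. Poly_Mapping.lookup m w) = Poly_Mapping.lookup m v + (\<Sum>w\<in>Poly_Mapping.keys m - {v}. Poly_Mapping.lookup m w)"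
    using v fin by (simp add: sum.remove)
  have lv: "Poly_Mapping.lookup m v \<ge> 1" using v by (simp add: in_keys_iff)
  have rest: "(\<Sum>w\<in>Poly_Mapping.keys m - {v}. Poly_Mapping.lookup m w) = 0" using split assms lv by linarith
  hence "\<forall>w\<in>Poly_Mapping.keys m - {v}. Poly_Mapping.lookup m w = 0" using fin by simp
  hence keys: "Poly_Mapping.keys m = {v}"
  proof -
    assume h: "\<forall>w\<in>Poly_Mapping.keys m - {v}. Poly_Mapping.lookup m w = 0"
    have "w = v" if "w \<in> Poly_Mapping.keys m" for w
    proof (rule ccontr)
      assume "w \<noteq> v"
      with h that have "Poly_Mapping.lookup m w = 0" by blast
      with that show False by (simp add: in_keys_iff)
    qed
    with v show ?thesis by blast
  qed
  have "Poly_Mapping.lookup m v = 1" using split assms rest by simp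
  hence "m = Poly_Mapping.single v 1"
  proof (intro poly_mapping_eqI)
    fix k show "Poly_Mapping.lookup m k = Poly_Mapping.lookup (Poly_Mapping.single v 1) k"
    proof (cases "k = v")
      case True thus ?thesis using \<open>Poly_Mapping.lookup m v = 1\<close> by simp
    next
      case False
      hence "k \<notin> Poly_Mapping.keys m" using keys by blast
      thus ?thesis using False by (simp add: in_keys_iff lookup_single_not_eq)
    qed
  qed
  with keys show ?thesis by blast
qed

lemma lin_iff: "(f \<in> polys_in n \<and> is_linear_form f) \<longleftrightarrow> Poly_Mapping.keys f \<subseteq> KK n"
proof
  assume a: "f \<in> polys_in n \<and> is_linear_form f"
  show "Poly_Mapping.keys f \<subseteq> KK n"
  proof
    fix m assume m: "m \<in> Poly_Mapping.keys f"
    then obtain v where v: "m = Poly_Mapping.single v 1" "Poly_Mapping.keys m = {v}"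
      using a monom_sum_one unfolding is_linear_form_def by blast
    have "v \<in> sym_idx n" using a m v unfolding polys_in_def by auto
    thus "m \<in> KK n" using v by (auto simp: KK_def)
  qed
next
  assume a: "Poly_Mapping.keys f \<subseteq> KK n"
  show "f \<in> polys_in n \<and> is_linear_form f"
  proof
    show "f \<in> polys_in n" unfolding polys_in_def
    proof (rule CollectI, rule ballI)
      fix m assume "m \<in> Poly_Mapping.keys f"
      with a obtain v where "v \<in> sym_idx n" "m = Poly_Mapping.single v 1" by (auto simp: KK_def)
      thus "Poly_Mapping.keys m \<subseteq> sym_idx n" by simp
    qed
    show "is_linear_form f" unfolding is_linear_form_def
    proof (rule ballI)
      fix m assume "m \<in> Poly_Mapping.keys f"
      with a obtain v where "v \<in> sym_idx n" "m = Poly_Mapping.single v 1" by (auto simp: KK_def)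
      thus "(\<Sum>v\<in>Poly_Mapping.keys m. Poly_Mapping.lookup m v) = 1" by simp
    qed
  qed
qed

lemma KK_add: "Poly_Mapping.keys f \<subseteq> KK n \<Longrightarrow> Poly_Mapping.keys g \<subseteq> KK n \<Longrightarrow> Poly_Mapping.keys (f + g) \<subseteq> KK n"
  using keys_add[of f g] by blast
lemma KK_cscale: "Poly_Mapping.keys f \<subseteq> KK n \<Longrightarrow> Poly_Mapping.keys (cscale a f) \<subseteq> KK n"
  using keys_cscale[of a f] by blast
lemma KK_diff: "Poly_Mapping.keys f \<subseteq> KK n \<Longrightarrow> Poly_Mapping.keys g \<subseteq> KK n \<Longrightarrow> Poly_Mapping.keys (f - g) \<subseteq> KK n"
  using keys_diff[of f g] by blast
lemma KK_X: "v \<in> sym_idx n \<Longrightarrow> Poly_Mapping.keys (X v) \<subseteq> KK n"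
  by (simp add: KK_def)

lemma lin_repr:
  assumes "Poly_Mapping.keys f \<subseteq> KK n"
  shows "f = (\<Sum>v\<in>sym_idx n. cscale (Poly_Mapping.lookup f (Poly_Mapping.single v 1)) (X v))"
proof (rule poly_mapping_eqI)
  fix m
  have fin: "finite (sym_idx n)" unfolding sym_idx_def
    by (rule finite_subset[of _ "{1..n} \<times> {1..n}"]) auto
  show "Poly_Mapping.lookup f m = Poly_Mapping.lookup (\<Sum>v\<in>sym_idx n. cscale (Poly_Mapping.lookup f (Poly_Mapping.single v 1)) (X v)) m"
  proof (cases "\<exists>w\<in>sym_idx n. m = Poly_Mapping.single w 1")
    case True
    then obtain w where w: "w \<in> sym_idx n" "m = Poly_Mapping.single w 1" by blast
    have inj: "Poly_Mapping.single v (1::nat) = Poly_Mapping.single w 1 \<longleftrightarrow> v = w" for v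
    proof
      assume "Poly_Mapping.single v (1::nat) = Poly_Mapping.single w 1"
      hence "Poly_Mapping.lookup (Poly_Mapping.single w (1::nat)) v = 1" by (metis lookup_single_eq)
      thus "v = w" by (cases "v = w") (auto simp: lookup_single_not_eq)
    qed simp
    have inj2: "Poly_Mapping.single w (1::nat) = Poly_Mapping.single v 1 \<longleftrightarrow> v = w" for v
      using inj[of v] by auto
    have "(\<Sum>v\<in>sym_idx n. Poly_Mapping.lookup f (Poly_Mapping.single v 1) * Poly_Mapping.lookup (X v) m)
        = (\<Sum>v\<in>sym_idx n. if v = w then Poly_Mapping.lookup f m else 0)"
      by (rule sum.cong) (use inj2 in \<open>auto simp: lookup_X w\<close>)
    also have "\<dots> = Poly_Mapping.lookup f m" using w fin by simp
    finally show ?thesis by (simp add: lookup_sum)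
  next
    case False
    hence "m \<notin> Poly_Mapping.keys f" using assms by (auto simp: KK_def)
    moreover have "Poly_Mapping.lookup (X v) m = 0" if "v \<in> sym_idx n" for v
      using False that by (auto simp: lookup_X)
    ultimately show ?thesis by (simp add: lookup_sum in_keys_iff)
  qed
qed

lemma fin_sym: "finite (sym_idx n)" unfolding sym_idx_def
    by (rule finite_subset[of _ "{1..n} \<times> {1..n}"]) auto


abbreviation AA :: "nat \<Rightarrow> complex mat" where "AA n \<equiv> adj_mat n (star_graph n)"

lemma AA_carrier[simp]: "AA n \<in> carrier_mat n n" "dim_row (AA n) = n" "dim_col (AA n) = n"
  by (auto simp: adj_mat_def)

lemma AA_entry: "i < n \<Longrightarrow> k < n \<Longrightarrow> AA n $$ (i,k) = (if i \<noteq> k \<and> (i = 0 \<or> k = 0) then 1 else 0)"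
  by (auto simp: adj_mat_def star_graph_def)

lemma sum_adj:
  assumes "i < n"
  shows "(\<Sum>k\<in>{0..<n}. AA n $$ (i,k) * g k) = (if i = 0 then (\<Sum>k\<in>{1..<n}. g k) else g 0)"
proof -
  have "(\<Sum>k\<in>{0..<n}. AA n $$ (i,k) * g k) = (\<Sum>k\<in>{0..<n}. if i \<noteq> k \<and> (i = 0 \<or> k = 0) then g k else 0)"
    by (rule sum.cong) (auto simp: AA_entry assms)
  also have "\<dots> = (if i = 0 then (\<Sum>k\<in>{1..<n}. g k) else g 0)"
  proof (cases "i = 0")
    case True
    have "(\<Sum>k\<in>{0..<n}. if i \<noteq> k \<and> (i = 0 \<or> k = 0) then g k else 0) = (\<Sum>k\<in>{0..<n}. if k \<in> {1..<n} then g k else 0)"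
      by (rule sum.cong) (auto simp: True)
    also have "\<dots> = (\<Sum>k\<in>{1..<n}. g k)" by (subst sum.If_cases) (auto intro: sum.cong)
    finally show ?thesis using True by simp
  next
    case False
    have "(\<Sum>k\<in>{0..<n}. if i \<noteq> k \<and> (i = 0 \<or> k = 0) then g k else 0) = (\<Sum>k\<in>{0..<n}. if k = 0 then g k else 0)"
      by (rule sum.cong) (use False in auto)
    also have "\<dots> = g 0" using assms by simp
    finally show ?thesis using False by simp
  qed
  finally show ?thesis .
qed

lemma sum_adj_r:
  assumes "j < n"
  shows "(\<Sum>k\<in>{0..<n}. g k * AA n $$ (k,j)) = (if j = 0 then (\<Sum>k\<in>{1..<n}. g k) else g 0)"
proof -
  have "(\<Sum>k\<in>{0..<n}. g k * AA n $$ (k,j)) = (\<Sum>k\<in>{0..<n}. AA n $$ (j,k) * g k)"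
    by (rule sum.cong) (auto simp: AA_entry assms)
  thus ?thesis using sum_adj[OF assms] by simp
qed

definition LM :: "nat \<Rightarrow> complex \<Rightarrow> complex \<Rightarrow> complex mat" where
  "LM n a b = a \<cdot>\<^sub>m 1\<^sub>m n + b \<cdot>\<^sub>m AA n"

lemma LM_carrier[simp]: "LM n a b \<in> carrier_mat n n" "dim_row (LM n a b) = n" "dim_col (LM n a b) = n"
  by (auto simp: LM_def)

lemma LM_entry: "i < n \<Longrightarrow> k < n \<Longrightarrow> LM n a b $$ (i,k) = a * (if i = k then 1 else 0) + b * AA n $$ (i,k)"
  by (simp add: LM_def)

lemma LM_mult:
  assumes N: "N \<in> carrier_mat n n" and ij: "i < n" "j < n"
  shows "(LM n a b * N) $$ (i,j) = a * N $$ (i,j) + b * (if i = 0 then (\<Sum>k\<in>{1..<n}. N $$ (k,j)) else N $$ (0,j))"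
proof -
  have "(LM n a b * N) $$ (i,j) = (\<Sum>k\<in>{0..<n}. LM n a b $$ (i,k) * N $$ (k,j))"
    using N ij by (simp add: scalar_prod_def)
  also have "\<dots> = (\<Sum>k\<in>{0..<n}. a * (if i = k then N $$ (k,j) else 0) + b * (AA n $$ (i,k) * N $$ (k,j)))"
    by (rule sum.cong) (use ij in \<open>auto simp: LM_entry algebra_simps\<close>)
  also have "\<dots> = (\<Sum>k\<in>{0..<n}. a * (if i = k then N $$ (k,j) else 0)) + b * (\<Sum>k\<in>{0..<n}. AA n $$ (i,k) * N $$ (k,j))"
    by (simp add: sum.distrib sum_distrib_left)
  also have "(\<Sum>k\<in>{0..<n}. a * (if i = k then N $$ (k,j) else 0)) = a * N $$ (i,j)"
    using ij by (simp add: sum_distrib_left[symmetric])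
  finally show ?thesis using sum_adj[OF ij(1)] by simp
qed

lemma mult_LM:
  assumes N: "N \<in> carrier_mat n n" and ij: "i < n" "j < n"
  shows "(N * LM n a b) $$ (i,j) = a * N $$ (i,j) + b * (if j = 0 then (\<Sum>k\<in>{1..<n}. N $$ (i,k)) else N $$ (i,0))"
proof -
  have "(N * LM n a b) $$ (i,j) = (\<Sum>k\<in>{0..<n}. N $$ (i,k) * LM n a b $$ (k,j))"
    using N ij by (simp add: scalar_prod_def)
  also have "\<dots> = (\<Sum>k\<in>{0..<n}. a * (if k = j then N $$ (i,k) else 0) + b * (N $$ (i,k) * AA n $$ (k,j)))"
    by (rule sum.cong) (use ij in \<open>auto simp: LM_entry algebra_simps\<close>)
  also have "\<dots> = (\<Sum>k\<in>{0..<n}. a * (if k = j then N $$ (i,k) else 0)) + b * (\<Sum>k\<in>{0..<n}. N $$ (i,k) * AA n $$ (k,j))"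
    by (simp add: sum.distrib sum_distrib_left)
  also have "(\<Sum>k\<in>{0..<n}. a * (if k = j then N $$ (i,k) else 0)) = a * N $$ (i,j)"
    using ij by (simp add: sum_distrib_left[symmetric])
  finally show ?thesis using sum_adj_r[OF ij(2)] by simp
qed

lemma lin_space_LM: "lin_space n E = {l1 \<cdot>\<^sub>m 1\<^sub>m n + l2 \<cdot>\<^sub>m adj_mat n E | l1 l2. True}"
  by (simp add: lin_space_def)


definition classmat :: "nat \<Rightarrow> complex \<Rightarrow> complex \<Rightarrow> complex \<Rightarrow> complex \<Rightarrow> complex mat" where
  "classmat n p q r t = mat n n (\<lambda>(i,j). if i = 0 \<and> j = 0 then p else if i = 0 \<or> j = 0 then r else if i = j then q else t)"

lemma classmat_carrier[simp]: "classmat n p q r t \<in> carrier_mat n n"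
  by (simp add: classmat_def)

lemma classmat_entry: "i < n \<Longrightarrow> j < n \<Longrightarrow> classmat n p q r t $$ (i,j) = (if i = 0 \<and> j = 0 then p else if i = 0 \<or> j = 0 then r else if i = j then q else t)"
  by (simp add: classmat_def)

lemma alg_aux:
  fixes a b p q r t m1 m2 :: complex
  assumes "a * p + b * (m1 * r) = 1" "m1 = m2 + 1" "a * q = 1 - b * r" "a * t = - b * r"
  shows "a * (p - q) = a * (m2 * t)"
proof -
  have 1: "a * p = 1 - b * (m1 * r)" using assms(1) by (simp add: eq_diff_eq)
  have "a * (p - q) = a * p - a * q" by (simp add: algebra_simps)
  also have "\<dots> = (1 - b * (m1 * r)) - (1 - b * r)" using 1 assms(3) by simp
  also have "\<dots> = m2 * (- b * r)" using assms(2) by (simp add: algebra_simps)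
  also have "\<dots> = m2 * (a * t)" using assms(4) by simp
  also have "\<dots> = a * (m2 * t)" by (simp add: algebra_simps)
  finally show ?thesis .
qed

lemma inv_struct:
  assumes n: "n \<ge> 3" and N: "N \<in> carrier_mat n n"
    and MN: "LM n a b * N = 1\<^sub>m n" and NM: "N * LM n a b = 1\<^sub>m n"
  shows "\<exists>p q r t. N = classmat n p q r t \<and> p - q = of_nat (n - 2) * t"
proof -
  have E1: "a * N $$ (i,j) + b * N $$ (0,j) = (if i = j then 1 else 0)" if "1 \<le> i" "i < n" "j < n" for i j
  proof -
    have "(LM n a b * N) $$ (i,j) = (if i = j then 1 else 0)" using MN that by simp
    thus ?thesis using LM_mult[OF N, of i j a b] that by simp
  qed
  have E2: "a * N $$ (i,j) + b * N $$ (i,0) = (if i = j then 1 else 0)" if "1 \<le> j" "i < n" "j < n" for i j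
  proof -
    have "(N * LM n a b) $$ (i,j) = (if i = j then 1 else 0)" using NM that by simp
    thus ?thesis using mult_LM[OF N, of i j a b] that by simp
  qed
  have E3: "a * N $$ (0,0) + b * (\<Sum>k\<in>{1..<n}. N $$ (k,0)) = 1"
  proof -
    have "(LM n a b * N) $$ (0,0) = 1" using MN n by simp
    thus ?thesis using LM_mult[OF N, of 0 0 a b] n by simp
  qed
  have a0: "a \<noteq> 0"
  proof
    assume "a = 0"
    with E1[of 1 1] E1[of 2 1] n show False by simp
  qed
  define p where "p = N $$ (0,0)"
  define r where "r = - b * p / a"
  have Ni0: "N $$ (i,0) = r" if "1 \<le> i" "i < n" for i
    using E1[of i 0] that a0 n by (simp add: r_def p_def field_simps eq_neg_iff_add_eq_0)
  have N0j: "N $$ (0,j) = r" if "1 \<le> j" "j < n" for j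
    using E2[of j 0] that a0 n by (simp add: r_def p_def field_simps eq_neg_iff_add_eq_0)
  have Nij: "N $$ (i,j) = ((if i = j then 1 else 0) - b * r) / a" if "1 \<le> i" "i < n" "1 \<le> j" "j < n" for i j
    using E1[of i j] N0j[of j] that a0 by (simp add: field_simps)
  have "(\<Sum>k\<in>{1..<n}. N $$ (k,0)) = (\<Sum>k\<in>{1..<n}. r)" by (rule sum.cong) (auto simp: Ni0)
  hence E3': "a * p + b * (of_nat (n - 1) * r) = 1" using E3 n by (simp add: p_def)
  define q where "q = (1 - b * r) / a"
  define t where "t = - b * r / a"
  have eq: "N = classmat n p q r t"
  proof (rule eq_matI)
    fix i j assume ij: "i < dim_row (classmat n p q r t)" "j < dim_col (classmat n p q r t)"
    hence ij': "i < n" "j < n" by (auto simp: classmat_def)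
    show "N $$ (i,j) = classmat n p q r t $$ (i,j)"
      using ij' Ni0[of i] N0j[of j] Nij[of i j] by (auto simp: classmat_entry p_def q_def t_def)
  qed (use N in \<open>auto simp: classmat_def\<close>)
  have nn: "of_nat (n - 1) = (of_nat (n - 2) + 1 :: complex)"
  proof -
    obtain k where "n = k + 3" using n by (metis add.commute le_Suc_ex)
    thus ?thesis by simp
  qed
  have aq: "a * q = 1 - b * r" using a0 by (simp add: q_def)
  have at: "a * t = - b * r" using a0 by (simp add: t_def)
  have "a * (p - q) = a * (of_nat (n - 2) * t)"
    by (rule alg_aux[OF E3' nn aq at])
  hence "p - q = of_nat (n - 2) * t" using a0 by simp
  with eq show ?thesis by blast
qed


lemma sum_if_j:
  assumes "1 \<le> j" "j < n"
  shows "(\<Sum>k\<in>{1..<n}. if k = j then q else t) = q + of_nat (n - 2) * (t::complex)"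
proof -
  have "(\<Sum>k\<in>{1..<n}. if k = j then q else t) = (if j = j then q else t) + (\<Sum>k\<in>{1..<n} - {j}. if k = j then q else t)"
    using assms by (subst sum.remove[of _ j]) auto
  also have "(\<Sum>k\<in>{1..<n} - {j}. if k = j then q else t) = (\<Sum>k\<in>{1..<n} - {j}. t)"
    by (rule sum.cong) auto
  also have "\<dots> = of_nat (n - 2) * t" using assms by (simp add: card_Diff_singleton)
  finally show ?thesis by simp
qed

lemma classmat_colsum0: "(\<Sum>k\<in>{1..<n}. classmat n p q r t $$ (k,0)) = of_nat (n - 1) * r"
proof -
  have "(\<Sum>k\<in>{1..<n}. classmat n p q r t $$ (k,0)) = (\<Sum>k\<in>{1..<n}. r)"
    by (rule sum.cong) (auto simp: classmat_entry)
  thus ?thesis by simp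
qed

lemma classmat_colsum: "1 \<le> j \<Longrightarrow> j < n \<Longrightarrow> (\<Sum>k\<in>{1..<n}. classmat n p q r t $$ (k,j)) = q + of_nat (n - 2) * t"
proof -
  assume j: "1 \<le> j" "j < n"
  have "(\<Sum>k\<in>{1..<n}. classmat n p q r t $$ (k,j)) = (\<Sum>k\<in>{1..<n}. if k = j then q else t)"
    by (rule sum.cong) (use j in \<open>auto simp: classmat_entry\<close>)
  thus ?thesis using sum_if_j[OF j] by simp
qed

lemma classmat_rowsum0: "(\<Sum>k\<in>{1..<n}. classmat n p q r t $$ (0,k)) = of_nat (n - 1) * r"
proof -
  have "(\<Sum>k\<in>{1..<n}. classmat n p q r t $$ (0,k)) = (\<Sum>k\<in>{1..<n}. r)"
    by (rule sum.cong) (auto simp: classmat_entry)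
  thus ?thesis by simp
qed

lemma classmat_rowsum: "1 \<le> j \<Longrightarrow> j < n \<Longrightarrow> (\<Sum>k\<in>{1..<n}. classmat n p q r t $$ (j,k)) = q + of_nat (n - 2) * t"
proof -
  assume j: "1 \<le> j" "j < n"
  have "(\<Sum>k\<in>{1..<n}. classmat n p q r t $$ (j,k)) = (\<Sum>k\<in>{1..<n}. if k = j then q else t)"
    by (rule sum.cong) (use j in \<open>auto simp: classmat_entry\<close>)
  thus ?thesis using sum_if_j[OF j] by simp
qed

lemma classmat_inv:
  assumes c1: "a * p + b * (of_nat (n - 1) * r) = 1"
    and c2: "a * r + b * (q + of_nat (n - 2) * t) = 0"
    and c3: "a * r + b * p = 0" and c4: "a * q + b * r = 1" and c5: "a * t + b * r = 0"
  shows "LM n a b * classmat n p q r t = 1\<^sub>m n" "classmat n p q r t * LM n a b = 1\<^sub>m n"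
proof -
  show "LM n a b * classmat n p q r t = 1\<^sub>m n"
  proof (rule eq_matI)
    fix i j assume "i < dim_row (1\<^sub>m n :: complex mat)" "j < dim_col (1\<^sub>m n :: complex mat)"
    hence ij: "i < n" "j < n" by auto
    show "(LM n a b * classmat n p q r t) $$ (i,j) = 1\<^sub>m n $$ (i,j)"
      using ij c1 c2 c3 c4 c5 classmat_colsum[of j n p q r t]
      by (simp add: LM_mult classmat_entry classmat_colsum0 del: of_nat_diff)
  qed (auto simp: classmat_def)
  show "classmat n p q r t * LM n a b = 1\<^sub>m n"
  proof (rule eq_matI)
    fix i j assume "i < dim_row (1\<^sub>m n :: complex mat)" "j < dim_col (1\<^sub>m n :: complex mat)"
    hence ij: "i < n" "j < n" by auto
    show "(classmat n p q r t * LM n a b) $$ (i,j) = 1\<^sub>m n $$ (i,j)"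
      using ij c1 c2 c3 c4 c5 classmat_rowsum[of i n p q r t]
      by (simp add: mult_LM classmat_entry classmat_rowsum0 del: of_nat_diff)
  qed (auto simp: classmat_def)
qed

definition Inv :: "nat \<Rightarrow> complex mat set" where
  "Inv n = {N \<in> carrier_mat n n. \<exists>M\<in>lin_space n (star_graph n). M * N = 1\<^sub>m n \<and> N * M = 1\<^sub>m n}"

lemma lin_space_eq: "lin_space n (star_graph n) = {LM n a b | a b. True}"
  by (auto simp: lin_space_def LM_def)

lemma vi_iff: "f \<in> vanishing_ideal n (reciprocal_variety n (star_graph n)) \<longleftrightarrow>
    f \<in> polys_in n \<and> (\<forall>N\<in>Inv n. peval f (coords N) = 0)"
  unfolding vanishing_ideal_def reciprocal_variety_def zariski_closure_def Inv_def
  by auto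

definition cval :: "complex \<Rightarrow> complex \<Rightarrow> complex \<Rightarrow> complex \<Rightarrow> nat \<times> nat \<Rightarrow> complex" where
  "cval p q r t v = (if v = (1,1) then p else if fst v = snd v then q else if fst v = 1 then r else t)"

lemma coords_classmat: "v \<in> sym_idx n \<Longrightarrow> coords (classmat n p q r t) v = cval p q r t v"
  by (cases v) (auto simp: coords_def sym_idx_def classmat_entry cval_def)

lemma inv_classmat:
  assumes n: "n \<ge> 3" and N: "N \<in> Inv n"
  shows "\<exists>p q r t. N = classmat n p q r t \<and> p - q = of_nat (n - 2) * t"
proof -
  from N obtain a b where "N \<in> carrier_mat n n" "LM n a b * N = 1\<^sub>m n" "N * LM n a b = 1\<^sub>m n"
    by (auto simp: Inv_def lin_space_eq)
  thus ?thesis using inv_struct[OF n] by blast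
qed

lemma classmat_in_Inv:
  assumes c1: "a * p + b * (of_nat (n - 1) * r) = 1"
    and c2: "a * r + b * (q + of_nat (n - 2) * t) = 0"
    and c3: "a * r + b * p = 0" and c4: "a * q + b * r = 1" and c5: "a * t + b * r = 0"
  shows "classmat n p q r t \<in> Inv n"
  unfolding Inv_def lin_space_eq using classmat_inv[OF assms] by auto


definition GG :: "nat \<Rightarrow> cpoly set" where
  "GG n = ({var 2 2 - var i i | i. 3 \<le> i \<and> i \<le> n}
             \<union> {var 1 2 - var i j | i j. i < j \<and> star_graph n i j}
             \<union> {var 2 3 - var i j | i j. 2 \<le> i \<and> i < j \<and> j \<le> n}
             \<union> {var 1 1 - cscale (of_nat (n - 2)) (var (n - 1) n) - var n n})"

definition PP :: "nat \<Rightarrow> cpoly \<Rightarrow> bool" where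
  "PP n f = (Poly_Mapping.keys f \<subseteq> KK n \<and> (\<forall>N\<in>Inv n. peval f (coords N) = 0))"

lemma PP_zero: "PP n 0" by (simp add: PP_def)
lemma PP_add: "PP n f \<Longrightarrow> PP n g \<Longrightarrow> PP n (f + g)"
  unfolding PP_def using KK_add[of f n g] by (auto simp: peval_add)
lemma PP_cscale: "PP n f \<Longrightarrow> PP n (cscale a f)"
  unfolding PP_def using KK_cscale[of f n a] by (auto simp: peval_cscale)

lemma peval_X_cm: "v \<in> sym_idx n \<Longrightarrow> peval (X v) (coords (classmat n p q r t)) = cval p q r t v"
  by (simp add: coords_classmat)

lemma in_sym: "1 \<le> i \<Longrightarrow> i \<le> j \<Longrightarrow> j \<le> n \<Longrightarrow> (i,j) \<in> sym_idx n"
  by (simp add: sym_idx_def)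

lemma GG_PP:
  assumes n: "n \<ge> 3" and g: "g \<in> GG n"
  shows "PP n g"
proof -
  have van: "peval g (coords (classmat n p q r t)) = 0" if pq: "p - q = of_nat (n - 2) * t" for p q r t
  proof -
    from g consider (a) i where "3 \<le> i" "i \<le> n" "g = var 2 2 - var i i"
      | (b) i j where "i < j" "star_graph n i j" "g = var 1 2 - var i j"
      | (c) i j where "2 \<le> i" "i < j" "j \<le> n" "g = var 2 3 - var i j"
      | (d) "g = var 1 1 - cscale (of_nat (n - 2)) (var (n - 1) n) - var n n"
      unfolding GG_def by blast
    thus ?thesis
    proof cases
      case a
      thus ?thesis using n by (simp add: var_X peval_diff coords_classmat in_sym cval_def)
    next
      case b
      hence "i = 1" "2 \<le> j" "j \<le> n" by (auto simp: star_graph_def)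
      thus ?thesis using b n by (simp add: var_X peval_diff coords_classmat in_sym cval_def)
    next
      case c
      thus ?thesis using n by (simp add: var_X peval_diff coords_classmat in_sym cval_def)
    next
      case d
      have "(n - 1, n) \<in> sym_idx n" "(n,n) \<in> sym_idx n" "(1,1) \<in> sym_idx n" using n by (auto simp: sym_idx_def)
      moreover have "n - 1 \<noteq> n" "n - 1 \<noteq> 1" "n \<noteq> 1" using n by auto
      ultimately have e: "coords (classmat n p q r t) (1,1) = p" "coords (classmat n p q r t) (n-1,n) = t"
          "coords (classmat n p q r t) (n,n) = q"
        by (simp_all add: coords_classmat cval_def)
      have "peval g (coords (classmat n p q r t)) = p - of_nat (n - 2) * t - q"
        using d n by (simp add: var_X peval_diff peval_cscale e[simplified] del: of_nat_diff)
      thus ?thesis using pq by (simp add: algebra_simps del: of_nat_diff)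
    qed
  qed
  have keys: "Poly_Mapping.keys g \<subseteq> KK n"
  proof -
    from g consider (a) i where "3 \<le> i" "i \<le> n" "g = var 2 2 - var i i"
      | (b) i j where "i < j" "star_graph n i j" "g = var 1 2 - var i j"
      | (c) i j where "2 \<le> i" "i < j" "j \<le> n" "g = var 2 3 - var i j"
      | (d) "g = var 1 1 - cscale (of_nat (n - 2)) (var (n - 1) n) - var n n"
      unfolding GG_def by blast
    thus ?thesis
    proof cases
      case a
      show ?thesis unfolding a(3) var_X by (intro KK_diff KK_X in_sym) (use a n in auto)
    next
      case b
      hence "i = 1" "2 \<le> j" "j \<le> n" by (auto simp: star_graph_def)
      show ?thesis unfolding b(3) var_X by (intro KK_diff KK_X in_sym) (use b \<open>i = 1\<close> \<open>2 \<le> j\<close> \<open>j \<le> n\<close> n in auto)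
    next
      case c
      show ?thesis unfolding c(4) var_X by (intro KK_diff KK_X in_sym) (use c n in auto)
    next
      case d
      show ?thesis unfolding d var_X by (intro KK_diff KK_X KK_cscale in_sym) (use n in auto)
    qed
  qed
  show ?thesis unfolding PP_def
  proof (intro conjI keys ballI)
    fix N assume "N \<in> Inv n"
    then obtain p q r t where "N = classmat n p q r t" "p - q = of_nat (n - 2) * t"
      using inv_classmat[OF n] by blast
    thus "peval g (coords N) = 0" using van by simp
  qed
qed

lemma cspan_PP: "n \<ge> 3 \<Longrightarrow> f \<in> cspan (GG n) \<Longrightarrow> PP n f"
  by (rule cspan_sub[of "PP n"]) (auto intro: PP_zero PP_add PP_cscale GG_PP)


definition rep :: "nat \<times> nat \<Rightarrow> nat \<times> nat" where
  "rep v = (if v = (1,1) then (1,1) else if fst v = snd v then (2,2) else if fst v = 1 then (1,2) else (2,3))"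

lemma rep_cases: "rep v = (1,1) \<or> rep v = (2,2) \<or> rep v = (1,2) \<or> rep v = (2,3)"
  by (simp add: rep_def)

lemma cval_rep: "cval p q r t v = (if rep v = (1,1) then p else if rep v = (2,2) then q else if rep v = (1,2) then r else t)"
  by (cases v) (auto simp: rep_def cval_def)

lemma GG_base: "g \<in> GG n \<Longrightarrow> g \<in> cspan (GG n)" by (rule cspan_base)

lemma rep_diff:
  assumes n: "n \<ge> 3" and v: "v \<in> sym_idx n"
  shows "X v - X (rep v) \<in> cspan (GG n)"
proof -
  obtain i j where ij: "v = (i,j)" "1 \<le> i" "i \<le> j" "j \<le> n" using v by (cases v) (auto simp: sym_idx_def)
  consider "i = 1" "j = 1" | "i = j" "i = 2" | "i = j" "3 \<le> i" | "i = 1" "2 \<le> j" | "2 \<le> i" "i < j"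
    using ij by linarith
  thus ?thesis
  proof cases
    case 1 thus ?thesis using ij by (simp add: rep_def cspan_zero)
  next
    case 2 thus ?thesis using ij by (simp add: rep_def cspan_zero)
  next
    case 3
    hence "var 2 2 - var i i \<in> GG n" using ij unfolding GG_def by blast
    hence "- (var 2 2 - var i i) \<in> cspan (GG n)" by (intro cspan_uminus cspan_base)
    thus ?thesis using 3 ij by (simp add: rep_def var_X)
  next
    case 4
    hence "star_graph n 1 j" using ij by (simp add: star_graph_def)
    hence "var 1 2 - var 1 j \<in> {var 1 2 - var i j |i j. i < j \<and> star_graph n i j}" using 4 by force
    hence "var 1 2 - var 1 j \<in> GG n" unfolding GG_def by blast
    hence "- (var 1 2 - var 1 j) \<in> cspan (GG n)" by (intro cspan_uminus cspan_base)
    thus ?thesis using 4 ij by (simp add: rep_def var_X numeral_2_eq_2)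
  next
    case 5
    hence "var 2 3 - var i j \<in> GG n" using ij unfolding GG_def by blast
    hence "- (var 2 3 - var i j) \<in> cspan (GG n)" by (intro cspan_uminus cspan_base)
    thus ?thesis using 5 ij by (simp add: rep_def var_X)
  qed
qed

lemma solve3:
  fixes k m w1 w2 w3 w4 :: complex
  assumes "m * k = 1" "w1 + w2 = 0" "-k*w1 + (1-k)*w2 + k*w3 + -k*w4 = 0" "-k*w1 + (1-k)*w2 + -k*w3 + -k*w4 = 0"
  shows "w3 = 0" "w2 = -w1" "w4 = -m*w1"
proof -
  have "2 * k * w3 = (-k*w1 + (1-k)*w2 + k*w3 + -k*w4) - (-k*w1 + (1-k)*w2 + -k*w3 + -k*w4)"
    by (simp add: algebra_simps)
  also have "\<dots> = 0" using assms by simp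
  finally have kw3: "k * w3 = 0" by simp
  have "w3 = (m * k) * w3" using assms(1) by simp
  also have "\<dots> = m * (k * w3)" by (simp add: algebra_simps)
  finally show w3: "w3 = 0" using kw3 by simp
  show w2: "w2 = -w1" using assms(2) by (simp add: eq_neg_iff_add_eq_0 add.commute)
  have "-k*w1 + (1-k)*(-w1) + -k*w4 = 0" using assms(3) w2 w3 by simp
  hence "- w1 - k * w4 = 0" by (simp add: algebra_simps)
  hence "m * (- w1 - k * w4) = 0" by simp
  hence "- m * w1 - (m * k) * w4 = 0" by (simp add: algebra_simps)
  hence "- m * w1 - w4 = 0" using assms(1) by simp
  thus "w4 = -m*w1" by (simp add: algebra_simps)
qed

lemma PP_cspan:
  assumes n: "n \<ge> 3" and P: "PP n f"
  shows "f \<in> cspan (GG n)"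
proof -
  let ?S = "sym_idx n"
  define c where "c v = Poly_Mapping.lookup f (Poly_Mapping.single v 1)" for v
  define W where "W w = (\<Sum>v\<in>?S. if rep v = w then c v else 0)" for w
  have keys: "Poly_Mapping.keys f \<subseteq> KK n" and van: "\<And>N. N \<in> Inv n \<Longrightarrow> peval f (coords N) = 0"
    using P by (auto simp: PP_def)
  have f_eq: "f = (\<Sum>v\<in>?S. cscale (c v) (X v))" unfolding c_def by (rule lin_repr[OF keys])
  have pev: "peval f (coords (classmat n p q r t)) = p * W (1,1) + q * W (2,2) + r * W (1,2) + t * W (2,3)" for p q r t
  proof -
    have "peval f (coords (classmat n p q r t)) = (\<Sum>v\<in>?S. c v * cval p q r t v)"
      by (subst f_eq) (simp add: peval_sum fin_sym peval_cscale coords_classmat)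
    also have "\<dots> = (\<Sum>v\<in>?S. p * (if rep v = (1,1) then c v else 0) + q * (if rep v = (2,2) then c v else 0)
        + r * (if rep v = (1,2) then c v else 0) + t * (if rep v = (2,3) then c v else 0))"
      by (rule sum.cong) (use rep_cases in \<open>auto simp: cval_rep\<close>)
    also have "\<dots> = p * W (1,1) + q * W (2,2) + r * W (1,2) + t * W (2,3)"
      by (simp add: W_def sum.distrib sum_distrib_left)
    finally show ?thesis .
  qed
  define m :: complex where "m = of_nat (n - 2)"
  define k :: complex where "k = 1 / m"
  have m0: "m \<noteq> 0" using n unfolding m_def by (simp del: of_nat_diff)
  have mk: "m * k = 1" "k * m = 1" using m0 by (auto simp: k_def)
  have k0: "k \<noteq> 0" using m0 by (simp add: k_def)
  have nn: "(of_nat (n - 1) :: complex) = m + 1"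
  proof -
    obtain l where "n = l + 3" using n by (metis add.commute le_Suc_ex)
    thus ?thesis by (simp add: m_def)
  qed
  have I1: "classmat n 1 1 0 0 \<in> Inv n"
    by (rule classmat_in_Inv[where a=1 and b=0]) simp_all
  have I2: "classmat n (-k) (1 - k) k (-k) \<in> Inv n"
    by (rule classmat_in_Inv[where a=1 and b=1]) (simp_all add: nn[simplified] m_def[symmetric] algebra_simps mk)
  have I3: "classmat n (-k) (1 - k) (-k) (-k) \<in> Inv n"
    by (rule classmat_in_Inv[where a=1 and b="-1"]) (simp_all add: nn[simplified] m_def[symmetric] algebra_simps mk)
  have V1: "W (1,1) + W (2,2) = 0" using van[OF I1] pev[of 1 1 0 0] by simp
  have V2: "-k * W (1,1) + (1 - k) * W (2,2) + k * W (1,2) + -k * W (2,3) = 0" using van[OF I2] pev by simp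
  have V3: "-k * W (1,1) + (1 - k) * W (2,2) + -k * W (1,2) + -k * W (2,3) = 0" using van[OF I3] pev by simp
  note S = solve3[OF mk(1) V1 V2 V3]
  have dec: "f = (\<Sum>v\<in>?S. cscale (c v) (X v - X (rep v))) + (\<Sum>v\<in>?S. cscale (c v) (X (rep v)))"
  proof -
    have "f = (\<Sum>v\<in>?S. cscale (c v) (X v - X (rep v)) + cscale (c v) (X (rep v)))"
      unfolding f_eq by (rule sum.cong) (simp_all add: cscale_diff)
    thus ?thesis by (simp add: sum.distrib)
  qed
  have sec: "(\<Sum>v\<in>?S. cscale (c v) (X (rep v))) = cscale (W (1,1)) (X (1,1) - X (2,2) - cscale m (X (2,3)))"
  proof (rule poly_mapping_eqI)
    fix mo
    let ?L = "\<lambda>w. Poly_Mapping.lookup (X w) mo"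
    have "Poly_Mapping.lookup (\<Sum>v\<in>?S. cscale (c v) (X (rep v))) mo = (\<Sum>v\<in>?S. c v * ?L (rep v))"
      by (simp add: lookup_sum)
    also have "\<dots> = (\<Sum>v\<in>?S. (if rep v = (1,1) then c v else 0) * ?L (1,1) + (if rep v = (2,2) then c v else 0) * ?L (2,2)
        + (if rep v = (1,2) then c v else 0) * ?L (1,2) + (if rep v = (2,3) then c v else 0) * ?L (2,3))"
      by (rule sum.cong) (use rep_cases in \<open>auto\<close>)
    also have "\<dots> = W (1,1) * ?L (1,1) + W (2,2) * ?L (2,2) + W (1,2) * ?L (1,2) + W (2,3) * ?L (2,3)"
      by (simp add: W_def sum.distrib sum_distrib_right)
    also have "\<dots> = W (1,1) * (?L (1,1) - ?L (2,2) - m * ?L (2,3))"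
      using S by (simp add: algebra_simps)
    also have "\<dots> = Poly_Mapping.lookup (cscale (W (1,1)) (X (1,1) - X (2,2) - cscale m (X (2,3)))) mo"
      by (simp add: lookup_minus)
    finally show "Poly_Mapping.lookup (\<Sum>v\<in>?S. cscale (c v) (X (rep v))) mo = Poly_Mapping.lookup (cscale (W (1,1)) (X (1,1) - X (2,2) - cscale m (X (2,3)))) mo" .
  qed
  define g4 where "g4 = var 1 1 - cscale (of_nat (n - 2)) (var (n - 1) n) - var n n"
  have last: "X (1,1) - X (2,2) - cscale m (X (2,3)) = g4 - (var 2 2 - var n n) - cscale m (var 2 3 - var (n - 1) n)"
  proof -
    have v1: "var 1 1 = X (1,1)" "var 2 2 = X (2,2)" "var n n = X (n,n)" "var 2 3 = X (2,3)" "var (n - 1) n = X (n - 1, n)"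
      by (simp_all add: var_X)
    show ?thesis unfolding g4_def v1 m_def[symmetric]
      by (rule poly_mapping_eqI) (simp add: lookup_minus lookup_add algebra_simps)
  qed
  have g4G: "g4 \<in> GG n" unfolding g4_def GG_def by blast
  have g1G: "var 2 2 - var n n \<in> GG n" using n unfolding GG_def by blast
  have g3G: "var 2 3 - var (n - 1) n \<in> GG n"
  proof -
    have "var 2 3 - var (n - 1) n \<in> {var 2 3 - var i j | i j. 2 \<le> i \<and> i < j \<and> j \<le> n}" using n by force
    thus ?thesis unfolding GG_def by blast
  qed
  have "(\<Sum>v\<in>?S. cscale (c v) (X v - X (rep v))) \<in> cspan (GG n)"
    by (rule cspan_sum, rule cspan_cscale, rule rep_diff[OF n]) simp
  moreover have "cscale (W (1,1)) (X (1,1) - X (2,2) - cscale m (X (2,3))) \<in> cspan (GG n)"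
    unfolding last by (intro cspan_cscale cspan_diff cspan_base g4G g1G g3G)
  ultimately show ?thesis using dec sec by (simp add: cspan_add)
qed


lemma AA_mult_vec:
  assumes v: "v \<in> carrier_vec n" and i: "i < n"
  shows "(AA n *\<^sub>v v) $ i = (if i = 0 then (\<Sum>k\<in>{1..<n}. v $ k) else v $ 0)"
proof -
  have "(AA n *\<^sub>v v) $ i = (\<Sum>k\<in>{0..<n}. AA n $$ (i,k) * v $ k)"
    using v i by (simp add: scalar_prod_def)
  thus ?thesis using sum_adj[OF i] by simp
qed

lemma eig_sigma:
  assumes n: "n \<ge> 2" and s: "\<sigma> * \<sigma> = of_nat (n - 1)"
  shows "eigenvalue (AA n) \<sigma>"
proof -
  define v :: "complex vec" where "v = vec n (\<lambda>i. if i = 0 then \<sigma> else 1)"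
  have vc: "v \<in> carrier_vec n" by (simp add: v_def)
  have "v $ 1 = 1" using n by (simp add: v_def)
  hence vnz: "v \<noteq> 0\<^sub>v n"
  proof -
    assume v1: "v $ 1 = 1"
    show ?thesis
    proof
      assume "v = 0\<^sub>v n"
      hence "v $ 1 = 0" using n by simp
      with v1 show False by simp
    qed
  qed
  have "AA n *\<^sub>v v = \<sigma> \<cdot>\<^sub>v v"
  proof (rule eq_vecI)
    fix i assume "i < dim_vec (\<sigma> \<cdot>\<^sub>v v)"
    hence i: "i < n" by (simp add: v_def)
    have sum1: "(\<Sum>k\<in>{1..<n}. v $ k) = of_nat (n - 1)"
    proof -
      have "(\<Sum>k\<in>{1..<n}. v $ k) = (\<Sum>k\<in>{1..<n}. 1)" by (rule sum.cong) (auto simp: v_def)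
      thus ?thesis by simp
    qed
    show "(AA n *\<^sub>v v) $ i = (\<sigma> \<cdot>\<^sub>v v) $ i"
      using i AA_mult_vec[OF vc i] sum1 s by (auto simp: v_def)
  qed (simp add: v_def)
  thus ?thesis using vc vnz unfolding eigenvalue_def eigenvector_def by auto
qed

lemma eig_zero:
  assumes n: "n \<ge> 3"
  shows "eigenvalue (AA n) 0"
proof -
  define v :: "complex vec" where "v = vec n (\<lambda>i. if i = 1 then 1 else if i = 2 then -1 else 0)"
  have vc: "v \<in> carrier_vec n" by (simp add: v_def)
  have "v $ 1 = 1" using n by (simp add: v_def)
  hence vnz: "v \<noteq> 0\<^sub>v n"
  proof -
    assume v1: "v $ 1 = 1"
    show ?thesis
    proof
      assume "v = 0\<^sub>v n"
      hence "v $ 1 = 0" using n by simp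
      with v1 show False by simp
    qed
  qed
  have "AA n *\<^sub>v v = 0 \<cdot>\<^sub>v v"
  proof (rule eq_vecI)
    fix i assume "i < dim_vec (0 \<cdot>\<^sub>v v)"
    hence i: "i < n" by (simp add: v_def)
    have sum1: "(\<Sum>k\<in>{1..<n}. v $ k) = 0"
    proof -
      have "(\<Sum>k\<in>{1..<n}. v $ k) = (\<Sum>k\<in>{1..<n}. (if k = 1 then 1 else 0) + (if k = 2 then -1 else 0))"
        by (rule sum.cong) (auto simp: v_def)
      also have "\<dots> = 0" using n by (simp add: sum.distrib)
      finally show ?thesis .
    qed
    show "(AA n *\<^sub>v v) $ i = (0 \<cdot>\<^sub>v v) $ i"
      using i AA_mult_vec[OF vc i] sum1 by (auto simp: v_def)
  qed (simp add: v_def)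
  thus ?thesis using vc vnz unfolding eigenvalue_def eigenvector_def by auto
qed

lemma eig_only:
  assumes n: "n \<ge> 2" and e: "eigenvalue (AA n) k"
  shows "k = 0 \<or> k * k = of_nat (n - 1)"
proof (rule ccontr)
  assume h: "\<not> (k = 0 \<or> k * k = of_nat (n - 1))"
  from e obtain v where vc: "v \<in> carrier_vec n" and vnz: "v \<noteq> 0\<^sub>v n" and ev: "AA n *\<^sub>v v = k \<cdot>\<^sub>v v"
    unfolding eigenvalue_def eigenvector_def by auto
  have Ei: "v $ 0 = k * v $ i" if "1 \<le> i" "i < n" for i
  proof -
    have "(AA n *\<^sub>v v) $ i = (k \<cdot>\<^sub>v v) $ i" using ev by simp
    thus ?thesis using AA_mult_vec[OF vc, of i] that vc by simp
  qed
  have E0: "(\<Sum>i\<in>{1..<n}. v $ i) = k * v $ 0"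
  proof -
    have "(AA n *\<^sub>v v) $ 0 = (k \<cdot>\<^sub>v v) $ 0" using ev by simp
    thus ?thesis using AA_mult_vec[OF vc, of 0] n vc by simp
  qed
  have "k * (k * v $ 0) = k * (\<Sum>i\<in>{1..<n}. v $ i)" using E0 by simp
  also have "\<dots> = (\<Sum>i\<in>{1..<n}. k * v $ i)" by (simp add: sum_distrib_left)
  also have "\<dots> = (\<Sum>i\<in>{1..<n}. v $ 0)" by (rule sum.cong) (auto simp: Ei)
  also have "\<dots> = of_nat (n - 1) * v $ 0" by simp
  finally have "(k * k - of_nat (n - 1)) * v $ 0 = 0" by (simp add: algebra_simps)
  hence v0: "v $ 0 = 0" using h by simp
  have "v = 0\<^sub>v n"
  proof (rule eq_vecI)
    fix i assume "i < dim_vec (0\<^sub>v n :: complex vec)"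
    hence i: "i < n" by simp
    show "v $ i = 0\<^sub>v n $ i"
    proof (cases "i = 0")
      case True thus ?thesis using v0 i by simp
    next
      case False thus ?thesis using Ei[of i] v0 h i by simp
    qed
  qed (use vc in simp)
  with vnz show False by simp
qed

lemma num_eig:
  assumes n: "n \<ge> 3"
  shows "num_eigenvalues n (star_graph n) = 3"
proof -
  define s :: complex where "s = of_real (sqrt (real (n - 1)))"
  have ss: "s * s = of_nat (n - 1)"
  proof -
    have "s * s = of_real (sqrt (real (n - 1)) * sqrt (real (n - 1)))" by (simp only: s_def of_real_mult)
    also have "sqrt (real (n - 1)) * sqrt (real (n - 1)) = real (n - 1)" by (simp only: real_sqrt_mult_self abs_of_nat)
    finally show ?thesis by simp
  qed
  have s0: "s \<noteq> 0" using n by (simp add: s_def)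
  have set: "{k. eigenvalue (AA n) k} = {0, s, -s}"
  proof (intro equalityI subsetI)
    fix k assume "k \<in> {k. eigenvalue (AA n) k}"
    hence "k = 0 \<or> k * k = s * s" using eig_only[of n k] n ss by simp
    moreover have "k * k = s * s \<Longrightarrow> k = s \<or> k = -s"
      by (metis power2_eq_square power2_eq_iff)
    ultimately show "k \<in> {0, s, -s}" by auto
  next
    fix k assume "k \<in> {0, s, -s}"
    thus "k \<in> {k. eigenvalue (AA n) k}"
      using eig_zero[OF n] eig_sigma[of n s] eig_sigma[of n "-s"] n ss by auto
  qed
  have "card {0, s, -s} = 3" using s0 by auto
  thus ?thesis unfolding num_eigenvalues_def set .
qed


definition sw :: "nat \<Rightarrow> nat \<Rightarrow> nat \<Rightarrow> nat" where
  "sw a b x = (if x = a then b else if x = b then a else x)"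

definition Good :: "nat \<Rightarrow> (nat \<Rightarrow> nat) \<Rightarrow> bool" where
  "Good n \<sigma> = (bij_betw \<sigma> {1..n} {1..n} \<and> (\<forall>x\<in>{1..n}. \<sigma> x = 1 \<longleftrightarrow> x = 1))"

lemma Good_aut: "Good n \<sigma> \<Longrightarrow> \<sigma> \<in> graph_aut n (star_graph n)"
proof -
  assume G: "Good n \<sigma>"
  have bij: "bij_betw \<sigma> {1..n} {1..n}" and f: "\<forall>x\<in>{1..n}. \<sigma> x = 1 \<longleftrightarrow> x = 1" using G by (auto simp: Good_def)
  have pres: "star_graph n (\<sigma> i) (\<sigma> j) = star_graph n i j" if ij: "i \<in> {1..n}" "j \<in> {1..n}" for i j
  proof -
    have r: "\<sigma> i \<in> {1..n}" "\<sigma> j \<in> {1..n}" using bij ij by (auto simp: bij_betw_def)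
    have e: "\<sigma> i = \<sigma> j \<longleftrightarrow> i = j" using bij ij by (auto simp: bij_betw_def dest: inj_onD)
    have o: "\<sigma> i = 1 \<longleftrightarrow> i = 1" "\<sigma> j = 1 \<longleftrightarrow> j = 1" using f ij by auto
    show ?thesis unfolding star_graph_def using r e o ij by simp
  qed
  show ?thesis unfolding graph_aut_def using bij pres by blast
qed

lemma Good_sw: "a \<in> {2..n} \<Longrightarrow> b \<in> {2..n} \<Longrightarrow> Good n (sw a b)"
proof -
  assume a: "a \<in> {2..n}" and b: "b \<in> {2..n}"
  have "bij_betw (sw a b) {1..n} {1..n}"
  proof (rule bij_betw_byWitness[where f' = "sw a b"])
    show "\<forall>x\<in>{1..n}. sw a b (sw a b x) = x" by (simp add: sw_def)
    show "\<forall>x\<in>{1..n}. sw a b (sw a b x) = x" by (simp add: sw_def)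
    show "sw a b ` {1..n} \<subseteq> {1..n}" using a b by (auto simp: sw_def)
    show "sw a b ` {1..n} \<subseteq> {1..n}" using a b by (auto simp: sw_def)
  qed
  moreover have "\<forall>x\<in>{1..n}. sw a b x = 1 \<longleftrightarrow> x = 1" using a b by (auto simp: sw_def)
  ultimately show ?thesis by (simp add: Good_def)
qed

lemma Good_comp: "Good n f \<Longrightarrow> Good n g \<Longrightarrow> Good n (f \<circ> g)"
  unfolding Good_def
proof (intro conjI)
  assume "bij_betw f {1..n} {1..n} \<and> (\<forall>x\<in>{1..n}. f x = 1 \<longleftrightarrow> x = 1)" "bij_betw g {1..n} {1..n} \<and> (\<forall>x\<in>{1..n}. g x = 1 \<longleftrightarrow> x = 1)"
  thus "bij_betw (f \<circ> g) {1..n} {1..n}" using bij_betw_trans by blast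
  show "\<forall>x\<in>{1..n}. (f \<circ> g) x = 1 \<longleftrightarrow> x = 1"
    using \<open>bij_betw f {1..n} {1..n} \<and> _\<close> \<open>bij_betw g {1..n} {1..n} \<and> _\<close>
    by (auto simp: bij_betw_def)
qed

lemma Good_id: "Good n id" by (simp add: Good_def)

lemma aut_fix1:
  assumes n: "n \<ge> 3" and s: "\<sigma> \<in> graph_aut n (star_graph n)"
  shows "\<sigma> 1 = 1"
proof (rule ccontr)
  assume h: "\<sigma> 1 \<noteq> 1"
  have bij: "bij_betw \<sigma> {1..n} {1..n}" and pres: "\<forall>i\<in>{1..n}. \<forall>j\<in>{1..n}. star_graph n (\<sigma> i) (\<sigma> j) = star_graph n i j"
    using s by (auto simp: graph_aut_def)
  have "star_graph n (\<sigma> 1) (\<sigma> 2)" using pres n by (auto simp: star_graph_def)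
  hence "\<sigma> 2 = 1" using h by (simp add: star_graph_def)
  moreover have "star_graph n (\<sigma> 1) (\<sigma> 3)" using pres n by (auto simp: star_graph_def)
  hence "\<sigma> 3 = 1" using h by (simp add: star_graph_def)
  ultimately have "\<sigma> 2 = \<sigma> 3" by simp
  moreover have "inj_on \<sigma> {1..n}" using bij by (simp add: bij_betw_def)
  ultimately show False using n by (auto dest: inj_onD)
qed

lemma aut_Good: "n \<ge> 3 \<Longrightarrow> \<sigma> \<in> graph_aut n (star_graph n) \<Longrightarrow> Good n \<sigma>"
proof -
  assume n: "n \<ge> 3" and s: "\<sigma> \<in> graph_aut n (star_graph n)"
  have bij: "bij_betw \<sigma> {1..n} {1..n}" using s by (simp add: graph_aut_def)
  have f1: "\<sigma> 1 = 1" by (rule aut_fix1[OF n s])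
  have "\<sigma> x = 1 \<longleftrightarrow> x = 1" if "x \<in> {1..n}" for x
  proof
    assume "\<sigma> x = 1"
    hence "\<sigma> x = \<sigma> 1" using f1 by simp
    thus "x = 1" using bij that n by (auto simp: bij_betw_def dest: inj_onD)
  qed (use f1 in simp)
  thus ?thesis using bij by (simp add: Good_def)
qed

definition tau :: "nat set \<Rightarrow> bool \<times> nat" where "tau P = (1 \<in> P, card P)"

lemma tau_Good:
  assumes G: "Good n \<sigma>" and P: "P \<subseteq> {1..n}"
  shows "tau (\<sigma> ` P) = tau P"
proof -
  have inj: "inj_on \<sigma> P" using G P by (auto simp: Good_def bij_betw_def intro: inj_on_subset)
  have "1 \<in> \<sigma> ` P \<longleftrightarrow> 1 \<in> P" using G P by (force simp: Good_def)
  thus ?thesis using inj by (simp add: tau_def card_image)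
qed

definition orb :: "nat \<Rightarrow> nat set \<Rightarrow> nat set set" where
  "orb n P = {\<sigma> ` P | \<sigma>. \<sigma> \<in> graph_aut n (star_graph n)}"

lemma upairs_sub: "P \<in> upairs n \<Longrightarrow> P \<subseteq> {1..n}"
  by (auto simp: upairs_def)

lemma reach:
  assumes n: "n \<ge> 3" and ij: "i \<in> {1..n}" "j \<in> {1..n}" and kl: "k \<in> {1..n}" "l \<in> {1..n}"
    and t: "tau {i,j} = tau {k,l}"
  shows "\<exists>\<sigma>. Good n \<sigma> \<and> \<sigma> ` {i,j} = {k,l}"
proof -
  have one: "1 \<in> {i,j} \<longleftrightarrow> 1 \<in> {k,l}" and cd: "card {i,j} = card {k,l}" using t by (auto simp: tau_def)
  have eq: "i = j \<longleftrightarrow> k = l"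
  proof -
    have c1: "card {i,j} = (if i = j then 1 else 2)" by (cases "i = j") simp_all
    have c2: "card {k,l} = (if k = l then 1 else 2)" by (cases "k = l") simp_all
    show ?thesis using cd unfolding c1 c2 by (cases "i = j"; cases "k = l") simp_all
  qed
  show ?thesis
  proof (cases "i = j")
    case True
    hence kl_eq: "k = l" using eq by simp
    show ?thesis
    proof (cases "i = 1")
      case True
      hence "k = 1" using one \<open>i = j\<close> kl_eq by auto
      thus ?thesis using True \<open>i = j\<close> kl_eq Good_id by (intro exI[of _ id]) auto
    next
      case False
      hence "k \<noteq> 1" using one \<open>i = j\<close> kl_eq by auto
      hence "Good n (sw i k)" using False ij kl by (intro Good_sw) auto
      thus ?thesis using \<open>i = j\<close> kl_eq by (intro exI[of _ "sw i k"]) (auto simp: sw_def)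
    qed
  next
    case False
    hence kl_ne: "k \<noteq> l" using eq by simp
    show ?thesis
    proof (cases "1 \<in> {i,j}")
      case True
      have "\<exists>a. {i,j} = {1,a} \<and> a \<in> {2..n}"
      proof (cases "i = 1")
        case True thus ?thesis using \<open>i \<noteq> j\<close> ij by (intro exI[of _ j]) auto
      next
        case False
        hence "j = 1" using \<open>1 \<in> {i,j}\<close> by auto
        thus ?thesis using False ij by (intro exI[of _ i]) auto
      qed
      then obtain a where a: "{i,j} = {1,a}" "a \<in> {2..n}" by blast
      have "\<exists>b. {k,l} = {1,b} \<and> b \<in> {2..n}"
      proof (cases "k = 1")
        case True thus ?thesis using kl_ne kl by (intro exI[of _ l]) auto
      next
        case False
        hence "l = 1" using one \<open>1 \<in> {i,j}\<close> by auto
        thus ?thesis using False kl by (intro exI[of _ k]) auto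
      qed
      then obtain b where b: "{k,l} = {1,b}" "b \<in> {2..n}" by blast
      have g: "Good n (sw a b)" using a b by (intro Good_sw)
      have "sw a b ` {1,a} = {1,b}" using a b by (auto simp: sw_def)
      hence "sw a b ` {i,j} = {k,l}" using a(1) b(1) by simp
      thus ?thesis using g by blast
    next
      case False
      hence ij2: "i \<in> {2..n}" "j \<in> {2..n}" using ij by auto
      have kl2: "k \<in> {2..n}" "l \<in> {2..n}" using False one kl by auto
      define s1 where "s1 = sw i k"
      define s2 where "s2 = sw (s1 j) l"
      have g1: "Good n s1" unfolding s1_def using ij2 kl2 by (intro Good_sw)
      have s1j: "s1 j \<in> {2..n}" using ij2 kl2 by (auto simp: s1_def sw_def)
      have g2: "Good n s2" unfolding s2_def using s1j kl2 by (intro Good_sw)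
      have s1i: "s1 i = k" by (simp add: s1_def sw_def)
      have s1jk: "s1 j \<noteq> k" using \<open>i \<noteq> j\<close> by (auto simp: s1_def sw_def)
      have "(s2 \<circ> s1) ` {i,j} = {s2 k, s2 (s1 j)}" using s1i by simp
      also have "s2 k = k" using s1jk kl_ne by (simp add: s2_def sw_def)
      also have "s2 (s1 j) = l" by (simp add: s2_def sw_def)
      finally show ?thesis using Good_comp[OF g2 g1] by blast
    qed
  qed
qed

lemma orb_eq:
  assumes n: "n \<ge> 3" and P: "P \<in> upairs n"
  shows "orb n P = {Q \<in> upairs n. tau Q = tau P}"
proof (intro equalityI subsetI)
  fix Q assume "Q \<in> orb n P"
  then obtain \<sigma> where s: "\<sigma> \<in> graph_aut n (star_graph n)" "Q = \<sigma> ` P" by (auto simp: orb_def)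
  have G: "Good n \<sigma>" by (rule aut_Good[OF n s(1)])
  obtain i j where ij: "P = {i,j}" "i \<in> {1..n}" "j \<in> {1..n}" using P by (auto simp: upairs_def)
  have "\<sigma> i \<in> {1..n}" "\<sigma> j \<in> {1..n}" using G ij by (auto simp: Good_def bij_betw_def)
  hence "Q \<in> upairs n" using s(2) ij unfolding upairs_def by auto
  moreover have "tau Q = tau P" using tau_Good[OF G upairs_sub[OF P]] s(2) by simp
  ultimately show "Q \<in> {Q \<in> upairs n. tau Q = tau P}" by simp
next
  fix Q assume Q: "Q \<in> {Q \<in> upairs n. tau Q = tau P}"
  obtain i j where ij: "P = {i,j}" "i \<in> {1..n}" "j \<in> {1..n}" using P by (auto simp: upairs_def)
  obtain k l where kl: "Q = {k,l}" "k \<in> {1..n}" "l \<in> {1..n}" using Q by (auto simp: upairs_def)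
  have "tau {i,j} = tau {k,l}" using Q ij kl by simp
  then obtain \<sigma> where "Good n \<sigma>" "\<sigma> ` {i,j} = {k,l}" using reach[OF n ij(2,3) kl(2,3)] by blast
  thus "Q \<in> orb n P" using ij kl Good_aut unfolding orb_def by blast
qed

lemma num_orbits:
  assumes n: "n \<ge> 3"
  shows "num_pair_orbits n (star_graph n) = 4"
proof -
  define F where "F t = {Q \<in> upairs n. tau Q = t}" for t
  define T where "T = {(True, 1::nat), (False, 1), (True, 2), (False, 2)}"
  have e1: "(\<lambda>P. {\<sigma> ` P | \<sigma>. \<sigma> \<in> graph_aut n (star_graph n)}) ` upairs n = F ` (tau ` upairs n)"
    using orb_eq[OF n] by (auto simp: orb_def[symmetric] F_def image_iff)
  have up: "{1} \<in> upairs n" "{2} \<in> upairs n" "{1,2} \<in> upairs n" "{2,3} \<in> upairs n"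
    using n unfolding upairs_def by (auto intro!: exI)
  have taus: "tau {1} = (True,1)" "tau {2} = (False,1)" "tau {1,2} = (True,2)" "tau {2,3} = (False,2)"
    by (auto simp: tau_def)
  have tT: "tau ` upairs n = T"
  proof (intro equalityI subsetI)
    fix t assume "t \<in> tau ` upairs n"
    then obtain P where P: "P \<in> upairs n" "t = tau P" by blast
    then obtain i j where Pij: "P = {i,j}" by (auto simp: upairs_def)
    have c: "card {i,j} = (if i = j then 1 else 2)" by (cases "i = j") simp_all
    show "t \<in> T" using P unfolding Pij T_def tau_def c by (cases "i = j") auto
  next
    fix t assume "t \<in> T"
    have "(True, 1) \<in> tau ` upairs n" "(False, 1) \<in> tau ` upairs n" "(True, 2) \<in> tau ` upairs n" "(False, 2) \<in> tau ` upairs n"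
      using image_eqI[where f=tau, OF taus(1)[symmetric] up(1)] image_eqI[where f=tau, OF taus(2)[symmetric] up(2)]
        image_eqI[where f=tau, OF taus(3)[symmetric] up(3)] image_eqI[where f=tau, OF taus(4)[symmetric] up(4)] by blast+
    thus "t \<in> tau ` upairs n" using \<open>t \<in> T\<close> unfolding T_def by blast
  qed
  have inj: "inj_on F T"
  proof (rule inj_onI)
    fix s t assume st: "s \<in> T" "t \<in> T" "F s = F t"
    obtain P where "P \<in> upairs n" "tau P = s" using st(1) tT by (metis imageE)
    hence "P \<in> F s" by (simp add: F_def)
    hence "P \<in> F t" using st by simp
    thus "s = t" using \<open>tau P = s\<close> by (simp add: F_def)
  qed
  have "card (F ` T) = card T" by (rule card_image[OF inj])
  also have "card T = 4" by (simp add: T_def)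
  finally show ?thesis unfolding num_pair_orbits_def e1 tT .
qed


lemma lin_main:
  assumes n: "n \<ge> 3"
  shows "{f \<in> vanishing_ideal n (reciprocal_variety n (star_graph n)). is_linear_form f} = cspan (GG n)"
proof (intro equalityI subsetI)
  fix f assume "f \<in> {f \<in> vanishing_ideal n (reciprocal_variety n (star_graph n)). is_linear_form f}"
  hence "PP n f" unfolding PP_def using vi_iff[of f n] lin_iff[of f n] by auto
  thus "f \<in> cspan (GG n)" by (rule PP_cspan[OF n])
next
  fix f assume "f \<in> cspan (GG n)"
  hence "PP n f" by (rule cspan_PP[OF n])
  thus "f \<in> {f \<in> vanishing_ideal n (reciprocal_variety n (star_graph n)). is_linear_form f}"
    unfolding PP_def using vi_iff[of f n] lin_iff[of f n] by auto
qed

theorem mainTheorem7: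
  fixes n :: nat
  assumes "n \<ge> 3"
  shows "num_eigenvalues n (star_graph n) = 3
    \<and> num_pair_orbits n (star_graph n) = 4
    \<and> {f \<in> vanishing_ideal n (reciprocal_variety n (star_graph n)). is_linear_form f}
      = cspan ({var 2 2 - var i i | i. 3 \<le> i \<and> i \<le> n}
             \<union> {var 1 2 - var i j | i j. i < j \<and> star_graph n i j}
             \<union> {var 2 3 - var i j | i j. 2 \<le> i \<and> i < j \<and> j \<le> n}
             \<union> {var 1 1 - cscale (of_nat (n - 2)) (var (n - 1) n) - var n n})"
  using num_eig[OF assms] num_orbits[OF assms] lin_main[OF assms] unfolding GG_def by simp

end
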